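(* Let $c=1/3$ for quadrangulations and $c=1/2$ for triangulations. For $0<u<1$, let $\mathcal P(L;u)$ be the limiting density of $L(ku)$ as $k\to\infty$ under $P_k$ (with $k$ ranging over integers for which $ku$ is an integer): $$\mathcal P(L;u)=\frac{2}{\sqrt\pi}\frac{\sqrt L}{c^{3/2}}e^{-L/c}\cdot\frac{\left(e^{\frac{L}{cb}}\sqrt{\frac{\pi L}{cb}}\left(1-\mathrm{erf}\sqrt{\frac{L}{cb}}\right)-1\right)p\!\left(\frac{L}{cb}\right)+r\!\left(\frac{L}{cb}\right)}{4(\sqrt b+b)^3},$$ where $$b=b(u)=\frac{(1-u)^2}{u^2},\qquad p(\ell)=2b(b^2-1)\ell^2-(5b^3+3b+4)\ell+6(b^3-1),\qquad r(\ell)=b(15b^2-1)\ell+2(5b^3-1).$$ Then $\tilde{\mathcal P}(R;u)=b(u)\,\mathcal P(b(u)R;u)$, the limiting density of $R(d)=\mathcal L(d)/(k-d)^2$ at $d=ku$, converges as $u\to1$ to $$\tilde{\mathcal P}(R;1)=2\sqrt{\frac{R}{\pi c^5}}\,(R+c)-\frac{R}{c^3}(2R+3c)\,e^{R/c}\left(1-\mathrm{erf}\sqrt{\frac Rc}\right).$$ Moreover $\mathcal P(L;u)\to\frac{2}{\sqrt\pi}\frac{\sqrt L}{c^{3/2}}e^{-L/c}$ as $u\to0$.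
   Context: A planar quadrangulation (resp. triangulation) is a planar map all of whose faces have degree 4 (resp. 3). A $k$-pointed-rooted map carries: - a marked vertex $v_0$; - a marked edge $e_1$ oriented from a vertex $v_1$ at graph distance $k$ from $v_0$ to a vertex at distance $k-1$. Cutting along the leftmost shortest path from $v_1$ to $v_0$ (first step $e_1$, then always the leftmost edge decreasing the distance to $v_0$) gives a $k$-slice. Its left boundary consists of the $k$ edges from $v_1$ to $v_0$, and its right boundary of the $k-1$ edges from the endpoint of $e_1$ to $v_0$. Hull perimeter, quadrangulations ($2\le d\le k-1$). Start at the right-boundary vertex $v^{(0)}$ at distance $d-1$. Repeatedly, from $v^{(i)}$, follow the leftmost 2-step path $v^{(i)}\to w\to v^{(i+1)}$, with respect to the first edge of the leftmost shortest path from $v^{(i)}$ to $v_0$, where $d(v_0,w)=d$, $d(v_0,v^{(i+1)})=d-1$ and $v^{(i+1)}\ne v^{(i)}$. This stops after $p$ steps at the left-boundary vertex at distance $d-1$, and $\mathcal L(d)=2p$. Hull perimeter, triangulations ($1\le d\le k-1$). Start at the right-boundary vertex at distance $d$. Repeatedly follow the leftmost edge, in the same sense, to a distinct vertex at distance $d$, until reaching the left-boundary vertex at distance $d$ after $p$ steps; then $\mathcal L(d)=p$. $P_k$ is the $N\to\infty$ limit of the uniform measure on $k$-pointed-rooted maps of the given type with $N$ faces. $L(d)=\mathcal L(d)/d^2$, and $\mathrm{erf}(a)=\frac{2}{\sqrt\pi}\int_0^ae^{-z^2}dz$. *)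

theory Defs
  imports "HOL-Analysis.Analysis"
begin

definition erf :: "real \<Rightarrow> real" where
  "erf a = 2 / sqrt pi *
     (if 0 \<le> a then integral {0..a} (\<lambda>z. exp (- z\<^sup>2))
      else - integral {a..0} (\<lambda>z. exp (- z\<^sup>2)))"

definition bfun :: "real \<Rightarrow> real" where
  "bfun u = (1 - u)\<^sup>2 / u\<^sup>2"

definition ppoly :: "real \<Rightarrow> real \<Rightarrow> real" where
  "ppoly b l = 2 * b * (b\<^sup>2 - 1) * l\<^sup>2 - (5 * b ^ 3 + 3 * b + 4) * l + 6 * (b ^ 3 - 1)"

definition rpoly :: "real \<Rightarrow> real \<Rightarrow> real" where
  "rpoly b l = b * (15 * b\<^sup>2 - 1) * l + 2 * (5 * b ^ 3 - 1)"

definition Pdens :: "real \<Rightarrow> real \<Rightarrow> real \<Rightarrow> real" where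
  "Pdens c L u =
    (let b = bfun u; l = L / (c * b) in
     2 / sqrt pi * sqrt L / c powr (3/2) * exp (- L / c) *
     (((exp l * sqrt (pi * l) * (1 - erf (sqrt l)) - 1) * ppoly b l + rpoly b l)
       / (4 * (sqrt b + b) ^ 3)))"

definition Ptilde :: "real \<Rightarrow> real \<Rightarrow> real \<Rightarrow> real" where
  "Ptilde c R u = bfun u * Pdens c (bfun u * R) u"

definition Ptilde1 :: "real \<Rightarrow> real \<Rightarrow> real" where
  "Ptilde1 c R = 2 * sqrt (R / (pi * c ^ 5)) * (R + c)
     - R / c ^ 3 * (2 * R + 3 * c) * exp (R / c) * (1 - erf (sqrt (R / c)))"

end

theory Submission
  imports Defs "HOL-Real_Asymp.Real_Asymp"
begin
lemma a1: "((\<lambda>b::real. (2 * b * (b\<^sup>2 - 1) / b^2)  / (4*(sqrt b + b)^3)) \<longlongrightarrow> 0) at_top" by real_asymp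
lemma a2: "((\<lambda>b::real. ((5 * b ^ 3 + 3 * b + 4) / b)  / (4*(sqrt b + b)^3)) \<longlongrightarrow> 0) at_top" by real_asymp
lemma a3: "((\<lambda>b::real. (6 * (b ^ 3 - 1))  / (4*(sqrt b + b)^3)) \<longlongrightarrow> 3/2) at_top" by real_asymp
lemma a4: "((\<lambda>b::real. (b * (15 * b\<^sup>2 - 1) / b)  / (4*(sqrt b + b)^3)) \<longlongrightarrow> 0) at_top" by real_asymp
lemma a5: "((\<lambda>b::real. (2 * (5 * b ^ 3 - 1))  / (4*(sqrt b + b)^3)) \<longlongrightarrow> 5/2) at_top" by real_asymp
lemma l1: "(bfun \<longlongrightarrow> 0) (at_left 1)" unfolding bfun_def by real_asymp
lemma l2: "filterlim bfun at_top (at_right 0)" unfolding bfun_def by real_asymp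
lemma l5: fixes m::real assumes "m > 0" shows "filterlim (\<lambda>b::real. m/b) (at_right 0) at_top" using assms by real_asymp
lemma l3: "((\<lambda>b::real. ppoly b (m/b) / (4*(sqrt b + b)^3)) \<longlongrightarrow> 3/2) at_top"
proof -
  have "((\<lambda>b::real. m^2 * ((2 * b * (b\<^sup>2 - 1) / b^2)  / (4*(sqrt b + b)^3))
     - m * (((5 * b ^ 3 + 3 * b + 4) / b)  / (4*(sqrt b + b)^3))
     + (6 * (b ^ 3 - 1))  / (4*(sqrt b + b)^3)) \<longlongrightarrow> m^2 * 0 - m * 0 + 3/2) at_top"
    by (intro tendsto_intros a1 a2 a3)
  moreover have "\<And>b. ppoly b (m/b) / (4*(sqrt b + b)^3) = m^2 * ((2 * b * (b\<^sup>2 - 1) / b^2)  / (4*(sqrt b + b)^3))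
     - m * (((5 * b ^ 3 + 3 * b + 4) / b)  / (4*(sqrt b + b)^3))
     + (6 * (b ^ 3 - 1))  / (4*(sqrt b + b)^3)"
    unfolding ppoly_def by (simp add: diff_divide_distrib add_divide_distrib power_divide algebra_simps)
  ultimately show ?thesis by simp
qed
lemma l4: "((\<lambda>b::real. rpoly b (m/b) / (4*(sqrt b + b)^3)) \<longlongrightarrow> 5/2) at_top"
proof -
  have "((\<lambda>b::real. m * ((b * (15 * b\<^sup>2 - 1) / b)  / (4*(sqrt b + b)^3))
     + (2 * (5 * b ^ 3 - 1))  / (4*(sqrt b + b)^3)) \<longlongrightarrow> m * 0 + 5/2) at_top"
    by (intro tendsto_intros a4 a5)
  moreover have "\<And>b. rpoly b (m/b) / (4*(sqrt b + b)^3) = m * ((b * (15 * b\<^sup>2 - 1) / b)  / (4*(sqrt b + b)^3))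
     + (2 * (5 * b ^ 3 - 1))  / (4*(sqrt b + b)^3)"
    unfolding rpoly_def by (simp add: diff_divide_distrib add_divide_distrib power_divide algebra_simps)
  ultimately show ?thesis by simp
qed

lemma erf_bound: assumes "0 \<le> a" shows "0 \<le> erf a \<and> erf a \<le> 2/sqrt pi * a"
proof -
  have int: "(\<lambda>z. exp(-z\<^sup>2)) integrable_on {0..a}"
    by (intro integrable_continuous_interval continuous_intros)
  have "integral {0..a} (\<lambda>z. exp(-z\<^sup>2)) \<le> integral {0..a} (\<lambda>z. 1::real)"
    by (rule integral_le[OF int]) auto
  also have "\<dots> = a" using assms by simp
  finally have u: "integral {0..a} (\<lambda>z. exp(-z\<^sup>2)) \<le> a" .
  have l: "0 \<le> integral {0..a} (\<lambda>z. exp(-z\<^sup>2))"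
    by (rule integral_nonneg[OF int]) auto
  show ?thesis using u l assms unfolding erf_def
    by (auto intro!: divide_right_mono)
qed

lemma erf_sqrt_lim: "((\<lambda>l. erf (sqrt l)) \<longlongrightarrow> 0) (at_right 0)"
proof (rule tendsto_sandwich[of "\<lambda>_. 0" _ _ "\<lambda>l. 2/sqrt pi * sqrt l"])
  show "\<forall>\<^sub>F n in at_right 0. 0 \<le> erf (sqrt n)"
    by (rule eventually_at_right_less[THEN eventually_mono]) (use erf_bound in auto)
  show "\<forall>\<^sub>F n in at_right 0. erf (sqrt n) \<le> 2 / sqrt pi * sqrt n"
    by (rule eventually_at_right_less[THEN eventually_mono]) (use erf_bound in auto)
  show "((\<lambda>l. 2 / sqrt pi * sqrt l) \<longlongrightarrow> 0) (at_right (0::real))"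
  proof -
    have "((\<lambda>l. 2 / sqrt pi * sqrt l) \<longlongrightarrow> 2 / sqrt pi * sqrt 0) (at_right (0::real))"
      by (intro tendsto_intros)
    then show ?thesis by simp
  qed
qed simp

definition EE :: "real \<Rightarrow> real" where
  "EE l = exp l * sqrt (pi * l) * (1 - erf (sqrt l))"

lemma EE_lim: "(EE \<longlongrightarrow> 0) (at_right 0)"
proof -
  have "((\<lambda>l. exp l * sqrt (pi * l) * (1 - erf (sqrt l))) \<longlongrightarrow> exp 0 * sqrt (pi * 0) * (1 - 0)) (at_right 0)"
    by (intro tendsto_intros erf_sqrt_lim)
  then show ?thesis unfolding EE_def[abs_def] by simp
qed

lemma part2:
  fixes c L :: real assumes c: "c > 0" and L: "L > 0"
  shows "((\<lambda>u. Pdens c L u) \<longlongrightarrow> 2 / sqrt pi * sqrt L / c powr (3/2) * exp (- L / c)) (at_right 0)"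
proof -
  define m where "m = L / c"
  have m: "m > 0" using c L by (simp add: m_def)
  define F where "F b = ((EE (m/b) - 1) * (ppoly b (m/b) / (4*(sqrt b + b)^3)) + rpoly b (m/b) / (4*(sqrt b + b)^3))" for b
  have "(F \<longlongrightarrow> (0 - 1) * (3/2) + 5/2) at_top"
    unfolding F_def
    by (intro tendsto_intros l3 l4 filterlim_compose[OF EE_lim l5[OF m]])
  then have F: "(F \<longlongrightarrow> 1) at_top" by simp
  have "((\<lambda>u. 2 / sqrt pi * sqrt L / c powr (3/2) * exp (- L / c) * F (bfun u)) \<longlongrightarrow> 2 / sqrt pi * sqrt L / c powr (3/2) * exp (- L / c) * 1) (at_right 0)"
    by (intro tendsto_intros filterlim_compose[OF F l2])
  moreover have "Pdens c L u = 2 / sqrt pi * sqrt L / c powr (3/2) * exp (- L / c) * F (bfun u)" for u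
    unfolding Pdens_def F_def Let_def EE_def m_def
    by (simp add: add_divide_distrib mult.assoc)
  ultimately show ?thesis by simp
qed

lemma key: fixes b R Y :: real assumes "b > 0" "R > 0"
  shows "b * (sqrt (b*R) * Y / (4*(sqrt b+b)^3)) = sqrt R * Y / (4*(1+sqrt b)^3)"
proof -
  define s where "s = sqrt b"
  have s: "s > 0" "b = s^2" using assms by (auto simp: s_def)
  have "sqrt (b*R) = s * sqrt R" by (simp add: s_def real_sqrt_mult)
  moreover have "(sqrt b + b)^3 = s^3 * (1+s)^3" using s
    by (simp add: s_def[symmetric] power_mult_distrib[symmetric] algebra_simps power2_eq_square)
  moreover have "(1+s)^3 \<noteq> 0" "s^3 \<noteq> 0" using s by auto
  ultimately show ?thesis using s unfolding s_def[symmetric]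
    by (simp add: divide_simps) (simp add: power2_eq_square power3_eq_cube algebra_simps)
qed

lemma key2: fixes b R A cp Ex X :: real assumes "b > 0" "R > 0"
  shows "b * (A * sqrt (b*R) / cp * Ex * (X / (4*(sqrt b+b)^3))) = A * sqrt R / cp * Ex * (X / (4*(1+sqrt b)^3))"
proof -
  have "b * (A * sqrt (b*R) / cp * Ex * (X / (4*(sqrt b+b)^3))) = b * (sqrt (b*R) * (A / cp * Ex * X) / (4*(sqrt b+b)^3))"
    by simp
  also have "\<dots> = sqrt R * (A / cp * Ex * X) / (4*(1+sqrt b)^3)" by (rule key[OF assms])
  finally show ?thesis by simp
qed

lemma final_eq: fixes c R :: real assumes c: "c > 0" and R: "R > 0"
  shows "2 / sqrt pi * sqrt R / c powr (3/2) * exp (- (0 * R) / c) *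
     (((EE (R/c) - 1) * ppoly 0 (R/c) + rpoly 0 (R/c)) / (4 * (1 + sqrt 0)^3)) = Ptilde1 c R"
proof -
  define sr where "sr = sqrt R"
  define sp where "sp = sqrt pi"
  define sc where "sc = sqrt c"
  define ex where "ex = exp (R/c)"
  define er where "er = erf (sqrt (R/c))"
  have h: "R = sr^2" "pi = sp^2" "c = sc^2" "sr > 0" "sp > 0" "sc > 0"
    using c R by (auto simp: sr_def sp_def sc_def)
  have cp: "c powr (3/2) = c * sc"
  proof -
    have "c powr (3/2) = c powr (1 + 1/2)" by simp
    also have "\<dots> = c powr 1 * c powr (1/2)" by (rule powr_add)
    also have "\<dots> = c * c powr (1/2)" using c by simp
    also have "\<dots> = c * sc" using c by (simp add: sc_def powr_half_sqrt)
    finally show ?thesis .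
  qed
  have s1: "sqrt (pi * (R / c)) = sp * sr / sc"
    by (simp add: sp_def sr_def sc_def real_sqrt_mult real_sqrt_divide)
  have s2: "sqrt (R / (pi * c ^ 5)) = sr / (sp * c^2 * sc)"
  proof -
    have "c^5 = (c^2)^2 * c" by (simp add: eval_nat_numeral)
    moreover have "sqrt ((c^2)^2) = c^2" using real_sqrt_abs[of "c^2"] by simp
    ultimately have "sqrt (c^5) = c^2 * sc" using c by (simp only: real_sqrt_mult sc_def)
    then show ?thesis by (simp add: sp_def sr_def real_sqrt_mult real_sqrt_divide)
  qed
  have EEe: "EE (R/c) = sp * sr / sc * (ex * (1 - er))" unfolding EE_def ex_def er_def s1 by simp
  show ?thesis
    unfolding Ptilde1_def EEe cp s2 ppoly_def rpoly_def ex_def[symmetric] er_def[symmetric] sr_def[symmetric] sp_def[symmetric]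
    using h by (simp add: field_simps power2_eq_square power3_eq_cube)
qed

lemma part1:
  fixes c R :: real assumes c: "c > 0" and R: "R > 0"
  shows "((\<lambda>u. Ptilde c R u) \<longlongrightarrow> Ptilde1 c R) (at_left 1)"
proof -
  define G where "G b = 2 / sqrt pi * sqrt R / c powr (3/2) * exp (- (b * R) / c) *
     (((EE (R/c) - 1) * ppoly b (R/c) + rpoly b (R/c)) / (4 * (1 + sqrt b)^3))" for b
  have "((\<lambda>u. G (bfun u)) \<longlongrightarrow> G 0) (at_left 1)"
    unfolding G_def ppoly_def rpoly_def
    by (intro tendsto_intros l1) (use c in simp_all)
  then have lim: "((\<lambda>u. G (bfun u)) \<longlongrightarrow> Ptilde1 c R) (at_left 1)"
    using final_eq[OF c R] unfolding G_def by simp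
  have "\<forall>\<^sub>F u in at_left (1::real). G (bfun u) = Ptilde c R u"
  proof (rule eventually_mono[OF eventually_at_left_real[of 0 1]])
    fix u :: real assume u: "u \<in> {0<..<1}"
    define b where "b = bfun u"
    have b: "b > 0" using u by (simp add: b_def bfun_def)
    have l: "b * R / (c * b) = R / c" using b by simp
    show "G (bfun u) = Ptilde c R u"
      unfolding Ptilde_def Pdens_def Let_def b_def[symmetric] l G_def EE_def
      by (rule key2[OF b R, symmetric])
  qed simp
  from tendsto_cong[OF this] lim show ?thesis by simp
qed

theorem mainTheorem13:
  fixes c :: real
  assumes "c = 1/3 \<or> c = 1/2"
  shows "(\<forall>R>0. ((\<lambda>u. Ptilde c R u) \<longlongrightarrow> Ptilde1 c R) (at_left 1))
       \<and> (\<forall>L>0. ((\<lambda>u. Pdens c L u) \<longlongrightarrow> 2 / sqrt pi * sqrt L / c powr (3/2) * exp (- L / c))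
               (at_right 0))"
proof -
  have c: "c > 0" using assms by auto
  show ?thesis using part1[OF c] part2[OF c] by blast
qed
end
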